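(* Let $\theta>0$, $\lambda>0$, $\mu>0$, $e>0$ with $\lambda<\mu+1$. Define the private optimal deployment $$\alpha^*(\theta)=\begin{cases}\mu+\theta(1-\lambda), & \lambda\theta\le 1,\\ \theta+\mu+1-2\sqrt{\lambda\theta}, & \lambda\theta>1,\end{cases}$$ the first-best deployment $$\alpha^{**}_{FB}(\theta)=\max\!\left\{0,\begin{cases}\mu+\theta(1-(1+e)\lambda), & (1+e)\lambda\theta\le 1,\\ \theta+\mu+1-2\sqrt{(1+e)\lambda\theta}, & (1+e)\lambda\theta>1,\end{cases}\right\}$$ and the second-best deployment $$\alpha^{**}_{SB}(\theta)=\max\!\left\{0,\begin{cases}\mu+\theta(1-(1+e)\lambda), & \lambda\theta\le 1,\\ \theta+\mu+1-(2+e)\sqrt{\lambda\theta}, & \lambda\theta>1.\end{cases}\right\}$$ Then: 1. $\alpha^{**}_{SB}(\theta)\le\alpha^{**}_{FB}(\theta)\le\alpha^*(\theta)$ for all $\theta>0$. 2. (First-best paradox conditions.) In the regime $(1+e)\lambda\theta\le1$, the derivative with respect to $\theta$ of $\mu+\theta(1-(1+e)\lambda)$ is negative iff $(1+e)\lambda>1$; in the regime $(1+e)\lambda\theta>1$, the derivative with respect to $\theta$ of $\theta+\mu+1-2\sqrt{(1+e)\lambda\theta}$ is negative iff $\theta<(1+e)\lambda$. Hence the first-best paradox region is weakly wider than the private one (private conditions: $\lambda>1$ in the regime $\lambda\theta\le1$, and $\theta<\lambda$ in the regime $\lambda\theta>1$). 3. (Second-best paradox conditions.) In the regime $\lambda\theta\le1$,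 the derivative with respect to $\theta$ of $\mu+\theta(1-(1+e)\lambda)$ is negative iff $(1+e)\lambda>1$; in the regime $\lambda\theta>1$, the derivative with respect to $\theta$ of $\theta+\mu+1-(2+e)\sqrt{\lambda\theta}$ is negative iff $\theta<\left(\frac{2+e}{2}\right)^2\lambda$. Hence the second-best paradox region is weakly wider than the private one. 4. There exist parameter values for which $\alpha^*$ is increasing in $\theta$ (outside the private paradox region) while the corresponding social deployment expression is decreasing in $\theta$ (inside the social paradox region).
   Context: $\theta$ is AI capability, $\lambda$ breach-loss magnitude, $\mu$ organizational readiness, $e$ breach externality parameter. The "paradox region" is the set of parameters where optimal deployment (private, first-best, or second-best as indicated) is decreasing in $\theta$. These deployment formulas arise from a firm with profit $(\theta+\mu)\alpha-\alpha^2/2-\frac{\alpha}{\alpha+d}\lambda\alpha\theta-d$; first-best maximizes this minus $e\frac{\alpha}{\alpha+d}\lambda\alpha\theta$ jointly over $(\alpha,d)$, second-best maximizes it over $\alpha$ with $d$ set at the firm's private optimum. *)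

theory Defs
  imports "HOL-Analysis.Analysis"
begin

text \<open>Parameters: th = AI capability theta, lam = breach-loss magnitude lambda,
  mu = organizational readiness, e = breach externality parameter.\<close>

definition alpha_priv :: "real \<Rightarrow> real \<Rightarrow> real \<Rightarrow> real" where
  "alpha_priv th lam mu =
     (if lam * th \<le> 1 then mu + th * (1 - lam)
      else th + mu + 1 - 2 * sqrt (lam * th))"

definition alpha_FB :: "real \<Rightarrow> real \<Rightarrow> real \<Rightarrow> real \<Rightarrow> real" where
  "alpha_FB th lam mu e = max 0
     (if (1 + e) * lam * th \<le> 1 then mu + th * (1 - (1 + e) * lam)
      else th + mu + 1 - 2 * sqrt ((1 + e) * lam * th))"

definition alpha_SB :: "real \<Rightarrow> real \<Rightarrow> real \<Rightarrow> real \<Rightarrow> real" where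
  "alpha_SB th lam mu e = max 0
     (if lam * th \<le> 1 then mu + th * (1 - (1 + e) * lam)
      else th + mu + 1 - (2 + e) * sqrt (lam * th))"

definition priv_slope :: "real \<Rightarrow> real \<Rightarrow> real \<Rightarrow> real" where
  "priv_slope th lam mu =
     (if lam * th \<le> 1 then deriv (\<lambda>t. mu + t * (1 - lam)) th
      else deriv (\<lambda>t. t + mu + 1 - 2 * sqrt (lam * t)) th)"

definition FB_slope :: "real \<Rightarrow> real \<Rightarrow> real \<Rightarrow> real \<Rightarrow> real" where
  "FB_slope th lam mu e =
     (if (1 + e) * lam * th \<le> 1 then deriv (\<lambda>t. mu + t * (1 - (1 + e) * lam)) th
      else deriv (\<lambda>t. t + mu + 1 - 2 * sqrt ((1 + e) * lam * t)) th)"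

definition SB_slope :: "real \<Rightarrow> real \<Rightarrow> real \<Rightarrow> real \<Rightarrow> real" where
  "SB_slope th lam mu e =
     (if lam * th \<le> 1 then deriv (\<lambda>t. mu + t * (1 - (1 + e) * lam)) th
      else deriv (\<lambda>t. t + mu + 1 - (2 + e) * sqrt (lam * t)) th)"

definition priv_paradox :: "real \<Rightarrow> real \<Rightarrow> real \<Rightarrow> bool" where
  "priv_paradox th lam mu \<longleftrightarrow> priv_slope th lam mu < 0"

definition FB_paradox :: "real \<Rightarrow> real \<Rightarrow> real \<Rightarrow> real \<Rightarrow> bool" where
  "FB_paradox th lam mu e \<longleftrightarrow> FB_slope th lam mu e < 0"

definition SB_paradox :: "real \<Rightarrow> real \<Rightarrow> real \<Rightarrow> real \<Rightarrow> bool" where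
  "SB_paradox th lam mu e \<longleftrightarrow> SB_slope th lam mu e < 0"

end

theory Submission
  imports Defs
begin

lemma dlin: "deriv (\<lambda>t. mu + t * (a::real)) th = a"
proof -
  have "((\<lambda>t. mu + t * (a::real)) has_real_derivative a) (at th)"
    by (auto intro!: derivative_eq_intros)
  thus ?thesis by (rule DERIV_imp_deriv)
qed

lemma dsq:
  fixes k th C mu :: real
  assumes "k > 0" "th > 0"
  shows "deriv (\<lambda>t. t + mu + 1 - C * sqrt (k * t)) th = 1 - C * k / (2 * sqrt (k*th))"
proof -
  have kt: "k * th > 0" using assms by simp
  have "((\<lambda>t. t + mu + 1 - C * sqrt (k * t)) has_real_derivative
          1 - C * (inverse (sqrt (k*th)) / 2 * (k * 1))) (at th)"
    using kt by (auto intro!: derivative_eq_intros)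
  moreover have "1 - C * (inverse (sqrt (k*th)) / 2 * (k * 1)) = 1 - C * k / (2 * sqrt (k*th))"
    by (simp add: field_simps)
  ultimately show ?thesis by (metis DERIV_imp_deriv)
qed

lemma sqneg:
  fixes k th C :: real
  assumes "k > 0" "th > 0" "C > 0"
  shows "1 - C * k / (2 * sqrt (k*th)) < 0 \<longleftrightarrow> 4 * th < C^2 * k"
proof -
  have s: "sqrt (k*th) > 0" using assms by simp
  have "1 - C * k / (2 * sqrt (k*th)) < 0 \<longleftrightarrow> 2 * sqrt (k*th) < C * k"
    using s by (simp add: field_simps)
  also have "\<dots> \<longleftrightarrow> (2 * sqrt (k*th))^2 < (C*k)^2"
  proof -
    have "C * k > 0" using assms by simp
    show ?thesis
    proof
      assume "2 * sqrt (k*th) < C * k"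
      thus "(2 * sqrt (k*th))^2 < (C*k)^2" using power_strict_mono[of "2 * sqrt (k*th)" "C * k" 2] s by simp
    next
      assume "(2 * sqrt (k*th))^2 < (C*k)^2"
      thus "2 * sqrt (k*th) < C * k" using \<open>C * k > 0\<close> by (meson less_imp_le power_less_imp_less_base)
    qed
  qed
  also have "(2 * sqrt (k*th))^2 = 4 * k * th" using assms by (simp add: power_mult_distrib)
  also have "4 * k * th < (C*k)^2 \<longleftrightarrow> 4 * th < C^2 * k"
    using assms by (simp add: power2_eq_square mult.assoc mult.commute mult.left_commute)
  finally show ?thesis .
qed

lemma hmono:
  fixes x y :: real
  assumes "0 \<le> x" "x \<le> y"
  shows "(if y \<le> 1 then - y else 1 - 2 * sqrt y) \<le> (if x \<le> 1 then - x else 1 - 2 * sqrt x)"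
proof -
  have "sqrt x \<le> sqrt y" using assms by simp
  show ?thesis
  proof (cases "y \<le> 1")
    case False
    hence "1 < sqrt y" by simp
    hence l: "1 - 2 * sqrt y < -1" by simp
    show ?thesis
    proof (cases "x \<le> 1")
      case True
      have e1: "(if y \<le> 1 then - y else 1 - 2 * sqrt y) = 1 - 2 * sqrt y" using False by simp
      have e2: "(if x \<le> 1 then - x else 1 - 2 * sqrt x) = - x" using True by simp
      show ?thesis unfolding e1 e2 using l True by linarith
    next
      case F2: False
      then show ?thesis using False \<open>sqrt x \<le> sqrt y\<close> by simp
    qed
  qed (use assms in auto)
qed

theorem proposition8:
  fixes th lam mu e :: real
  assumes "th > 0" and "lam > 0" and "mu > 0" and "e > 0" and "lam < mu + 1"
  shows
   "(alpha_SB th lam mu e \<le> alpha_FB th lam mu e \<and> alpha_FB th lam mu e \<le> alpha_priv th lam mu)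
    \<and>
    (((1 + e) * lam * th \<le> 1 \<longrightarrow>
        (deriv (\<lambda>t. mu + t * (1 - (1 + e) * lam)) th < 0 \<longleftrightarrow> (1 + e) * lam > 1))
     \<and> ((1 + e) * lam * th > 1 \<longrightarrow>
        (deriv (\<lambda>t. t + mu + 1 - 2 * sqrt ((1 + e) * lam * t)) th < 0 \<longleftrightarrow> th < (1 + e) * lam))
     \<and> (priv_paradox th lam mu \<longrightarrow> FB_paradox th lam mu e))
    \<and>
    ((lam * th \<le> 1 \<longrightarrow>
        (deriv (\<lambda>t. mu + t * (1 - (1 + e) * lam)) th < 0 \<longleftrightarrow> (1 + e) * lam > 1))
     \<and> (lam * th > 1 \<longrightarrow>
        (deriv (\<lambda>t. t + mu + 1 - (2 + e) * sqrt (lam * t)) th < 0 \<longleftrightarrow> th < ((2 + e) / 2)^2 * lam))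
     \<and> (priv_paradox th lam mu \<longrightarrow> SB_paradox th lam mu e))
    \<and>
    (\<exists>th' lam' mu' e' :: real. th' > 0 \<and> lam' > 0 \<and> mu' > 0 \<and> e' > 0 \<and> lam' < mu' + 1 \<and>
        priv_slope th' lam' mu' > 0 \<and>
        FB_paradox th' lam' mu' e' \<and> SB_paradox th' lam' mu' e')"
proof -
  define c where "c = 1 + e"
  have c1: "c > 1" using assms c_def by simp
  have ck: "c * lam > 0" using c1 assms by simp
  have ct: "c * lam * th \<ge> lam * th" using c1 assms by (simp add: mult_right_mono)
  have lt0: "lam * th > 0" using assms by simp
  have dFB: "deriv (\<lambda>t. t + mu + 1 - 2 * sqrt (c * lam * t)) th = 1 - 2 * (c*lam) / (2 * sqrt (c*lam*th))"
    using dsq[OF ck assms(1), of mu 2] by (simp add: mult.assoc)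
  have dSB: "deriv (\<lambda>t. t + mu + 1 - (2 + e) * sqrt (lam * t)) th = 1 - (2+e) * lam / (2 * sqrt (lam*th))"
    using dsq[OF assms(2) assms(1), of mu "2+e"] by simp
  have iFB: "1 - 2 * (c*lam) / (2 * sqrt (c*lam*th)) < 0 \<longleftrightarrow> th < c * lam"
    using sqneg[OF ck assms(1), of 2] by (simp add: mult.assoc)
  have iSB: "1 - (2+e) * lam / (2 * sqrt (lam*th)) < 0 \<longleftrightarrow> th < ((2 + e) / 2)^2 * lam"
    using sqneg[OF assms(2) assms(1), of "2+e"] assms by (simp add: power_divide field_simps)
  have dP: "deriv (\<lambda>t. t + mu + 1 - 2 * sqrt (lam * t)) th = 1 - 2 * lam / (2 * sqrt (lam*th))"
    using dsq[OF assms(2) assms(1), of mu 2] by simp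
  have iP: "1 - 2 * lam / (2 * sqrt (lam*th)) < 0 \<longleftrightarrow> th < lam"
    using sqneg[OF assms(2) assms(1), of 2] by simp
  have e2: "lam \<le> ((2 + e) / 2)^2 * lam"
  proof -
    have "1 \<le> ((2 + e) / 2)^2" using assms by (simp add: power2_eq_square field_simps)
    thus ?thesis using assms by simp
  qed
  have privnn: "alpha_priv th lam mu \<ge> 0"
  proof (cases "lam * th \<le> 1")
    case True
    show ?thesis
    proof (cases "lam \<le> 1")
      case True
      then show ?thesis using \<open>lam*th \<le> 1\<close> assms by (simp add: alpha_priv_def mult_left_le)
    next
      case False
      have "th \<le> 1/lam" using True assms by (simp add: field_simps mult.commute)
      moreover have "1 - lam \<le> 0" using False by simp
      ultimately have "th * (1 - lam) \<ge> (1/lam) * (1 - lam)"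
        by (rule mult_right_mono_neg)
      moreover have "mu + (1/lam) * (1 - lam) \<ge> 0"
      proof -
        have "(lam - 1)^2 \<ge> 0" by simp
        have a: "mu * lam \<ge> (lam - 1) * lam" by (rule mult_right_mono) (use assms in auto)
        have b: "(lam - 1) * lam \<ge> (lam - 1) * 1" by (rule mult_left_mono) (use False in auto)
        have "mu * lam + (1 - lam) \<ge> 0" using a b by simp
        thus ?thesis using assms by (simp add: field_simps)
      qed
      ultimately show ?thesis using True by (simp add: alpha_priv_def)
    qed
  next
    case False
    have "(sqrt th - sqrt lam)^2 \<ge> 0" by simp
    hence "th + lam - 2 * sqrt (lam*th) \<ge> 0" using assms
      by (simp add: power2_diff real_sqrt_mult algebra_simps)
    thus ?thesis using False assms by (simp add: alpha_priv_def)
  qed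
  have FBinner: "(if c * lam * th \<le> 1 then mu + th * (1 - c * lam)
      else th + mu + 1 - 2 * sqrt (c * lam * th)) \<le> alpha_priv th lam mu"
  proof -
    have h: "(if c*lam*th \<le> 1 then - (c*lam*th) else 1 - 2 * sqrt (c*lam*th)) \<le>
        (if lam*th \<le> 1 then - (lam*th) else 1 - 2 * sqrt (lam*th))"
      using hmono[of "lam*th" "c*lam*th"] lt0 ct by simp
    show ?thesis using h unfolding alpha_priv_def by (auto simp: algebra_simps split: if_splits)
  qed
  have p1b: "alpha_FB th lam mu e \<le> alpha_priv th lam mu"
    using FBinner privnn unfolding alpha_FB_def c_def by simp
  have SBinner: "(if lam * th \<le> 1 then mu + th * (1 - c * lam)
      else th + mu + 1 - (2 + e) * sqrt (lam * th)) \<le>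
      (if c * lam * th \<le> 1 then mu + th * (1 - c * lam)
      else th + mu + 1 - 2 * sqrt (c * lam * th))"
  proof (cases "lam * th \<le> 1")
    case T1: True
    show ?thesis
    proof (cases "c * lam * th \<le> 1")
      case True then show ?thesis using T1 by simp
    next
      case False
      define s where "s = sqrt (c*lam*th)"
      have q1: "(s - 1)^2 \<ge> 0" by simp
      have q2: "(s - 1)^2 = s^2 - 2 * s + 1" by (simp add: power2_diff)
      have q3: "s^2 = c*lam*th" unfolding s_def using ck assms by simp
      have "- (c*lam*th) \<le> 1 - 2 * s"
        using q1 q2 q3 by linarith
      hence "- (c*lam*th) \<le> 1 - 2 * sqrt (c*lam*th)" by (simp only: s_def)
      then show ?thesis using T1 False by (simp add: algebra_simps)
    qed
  next
    case F1: False
    hence F2: "\<not> c * lam * th \<le> 1" using ct by linarith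
    have "2 * sqrt c \<le> 2 + e"
    proof -
      have "(2 * sqrt c)^2 \<le> (2 + e)^2" using c1 c_def assms by (simp add: power2_eq_square algebra_simps)
      moreover have "2 + e \<ge> 0" using assms by simp
      ultimately show ?thesis using power2_le_imp_le by blast
    qed
    hence "2 * sqrt c * sqrt (lam*th) \<le> (2 + e) * sqrt (lam*th)"
      by (rule mult_right_mono) (use lt0 in auto)
    moreover have "sqrt (c*lam*th) = sqrt c * sqrt (lam*th)" by (simp add: real_sqrt_mult mult.assoc)
    ultimately show ?thesis using F1 F2 by simp
  qed
  have p1a: "alpha_SB th lam mu e \<le> alpha_FB th lam mu e"
    unfolding alpha_SB_def alpha_FB_def by (rule max.mono) (use SBinner c_def in auto)
  have pp: "priv_paradox th lam mu \<longleftrightarrow> (if lam * th \<le> 1 then lam > 1 else th < lam)"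
    unfolding priv_paradox_def priv_slope_def using dlin dP iP
    by (simp add: dlin)
  have fp: "FB_paradox th lam mu e \<longleftrightarrow> (if c * lam * th \<le> 1 then c * lam > 1 else th < c * lam)"
    unfolding FB_paradox_def FB_slope_def c_def[symmetric] using dFB iFB
    by (simp add: dlin)
  have sp: "SB_paradox th lam mu e \<longleftrightarrow> (if lam * th \<le> 1 then c * lam > 1 else th < ((2 + e) / 2)^2 * lam)"
    unfolding SB_paradox_def SB_slope_def c_def[symmetric] using dSB iSB
    by (simp add: dlin)
  have pf: "priv_paradox th lam mu \<longrightarrow> FB_paradox th lam mu e"
  proof
    assume "priv_paradox th lam mu"
    show "FB_paradox th lam mu e"
    proof (cases "lam * th \<le> 1")
      case True
      hence l1: "lam > 1" using pp \<open>priv_paradox th lam mu\<close> by simp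
      have "1 * th < lam * th" by (rule mult_strict_right_mono) (use l1 assms in auto)
      hence "th < 1" using True by simp
      have "lam * 1 < lam * c" by (rule mult_strict_left_mono) (use c1 assms in auto)
      hence lc: "lam < c * lam" by (simp add: mult.commute)
      have "th < c * lam" "c * lam > 1" using l1 lc \<open>th < 1\<close> by linarith+
      thus ?thesis using fp True by simp
    next
      case False
      hence "th < lam" using pp \<open>priv_paradox th lam mu\<close> by simp
      moreover have "lam \<le> c * lam" using c1 assms by simp
      ultimately show ?thesis using fp False ct by simp
    qed
  qed
  have ps: "priv_paradox th lam mu \<longrightarrow> SB_paradox th lam mu e"
  proof
    assume "priv_paradox th lam mu"
    show "SB_paradox th lam mu e"
    proof (cases "lam * th \<le> 1")
      case True
      hence l1: "lam > 1" using pp \<open>priv_paradox th lam mu\<close> by simp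
      have "lam * 1 < lam * c" by (rule mult_strict_left_mono) (use c1 assms in auto)
      hence "lam < c * lam" by (simp add: mult.commute)
      hence "c * lam > 1" using l1 by linarith
      thus ?thesis using sp True by simp
    next
      case False
      hence "th < lam" using pp \<open>priv_paradox th lam mu\<close> by simp
      thus ?thesis using sp False e2 by simp
    qed
  qed
  have d1: "deriv (\<lambda>t. 1 + t / 2) (1 / 2) = (1/2::real)"
    by (rule DERIV_imp_deriv, auto intro!: derivative_eq_intros)
  have d2: "deriv (\<lambda>t. 1 - t / 2) (1 / 2) = (-1/2::real)"
    by (rule DERIV_imp_deriv, auto intro!: derivative_eq_intros)
  have ex: "\<exists>th' lam' mu' e' :: real. th' > 0 \<and> lam' > 0 \<and> mu' > 0 \<and> e' > 0 \<and> lam' < mu' + 1 \<and>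
        priv_slope th' lam' mu' > 0 \<and>
        FB_paradox th' lam' mu' e' \<and> SB_paradox th' lam' mu' e'"
    using d1 d2 apply -
    apply (rule exI[of _ "1/2"], rule exI[of _ "1/2"], rule exI[of _ 1], rule exI[of _ 2])
    by (simp add: priv_slope_def FB_paradox_def FB_slope_def SB_paradox_def SB_slope_def dlin)
  show ?thesis
    using p1a p1b pf ps ex dFB iFB dSB iSB assms
    unfolding c_def by (simp add: dlin)
qed

end
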